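(* Let $R$ be a unital ring with involution, let $a\in R$ be core invertible, and let $b\in R$. Then the following conditions are equivalent: (1) $a\overset{\circledast}{\leq} b$; (2) there exists $p\in R$ with $p^2=p=p^{*}$ such that $a=pb$, $ap=bp$ and $aR=pR$; (3) there exists $p\in R$ with $p^2=p=p^{*}$ such that $a=pb$ and $ap=bp$; (4) there exists $p\in R$ with $p^2=p=p^{*}$ such that, writing $x_{11}=pxp$, $x_{12}=px(1-p)$, $x_{21}=(1-p)xp$, $x_{22}=(1-p)x(1-p)$ for $x\in R$, one has $a_{21}=0$, $a_{22}=0$, $b_{11}=a_{11}$, $b_{12}=a_{12}$ and $b_{21}=0$ (i.e. in matrix form relative to $p$, $a=\begin{pmatrix}a_1&a_2\\0&0\end{pmatrix}$ and $b=\begin{pmatrix}a_1&a_2\\0&b_4\end{pmatrix}$).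
   Context: $R$ is a ring with identity and an involution $x\mapsto x^{*}$. An element $a\in R$ is core invertible if there exists $x\in R$ with $axa=a$, $xR=aR$ and $Rx=Ra^{*}$; such $x$ is unique, called the core inverse of $a$ and denoted $a^{\circledast}$. For $a$ core invertible and $b\in R$, $a\overset{\circledast}{\leq} b$ means $a^{\circledast}a=a^{\circledast}b$ and $aa^{\circledast}=ba^{\circledast}$. $aR=\{ax:x\in R\}$. *)

theory Defs
  imports Main
begin

definition involution :: "('a::ring_1 \<Rightarrow> 'a) \<Rightarrow> bool" where
  "involution s \<longleftrightarrow> (\<forall>x y. s (x + y) = s x + s y) \<and> (\<forall>x y. s (x * y) = s y * s x)
     \<and> (\<forall>x. s (s x) = x)"

definition rideal :: "'a::ring_1 \<Rightarrow> 'a set" where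
  "rideal a = {a * x | x. True}"

definition lideal :: "'a::ring_1 \<Rightarrow> 'a set" where
  "lideal a = {x * a | x. True}"

definition is_core_inverse :: "('a::ring_1 \<Rightarrow> 'a) \<Rightarrow> 'a \<Rightarrow> 'a \<Rightarrow> bool" where
  "is_core_inverse s a x \<longleftrightarrow> a * x * a = a \<and> rideal x = rideal a \<and> lideal x = lideal (s a)"

definition core_invertible :: "('a::ring_1 \<Rightarrow> 'a) \<Rightarrow> 'a \<Rightarrow> bool" where
  "core_invertible s a \<longleftrightarrow> (\<exists>x. is_core_inverse s a x)"

definition core_inv :: "('a::ring_1 \<Rightarrow> 'a) \<Rightarrow> 'a \<Rightarrow> 'a" where
  "core_inv s a = (THE x. is_core_inverse s a x)"

definition core_le :: "('a::ring_1 \<Rightarrow> 'a) \<Rightarrow> 'a \<Rightarrow> 'a \<Rightarrow> bool" where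
  "core_le s a b \<longleftrightarrow> core_inv s a * a = core_inv s a * b \<and> a * core_inv s a = b * core_inv s a"

end

theory Submission
  imports Defs
begin

lemma self_r: "(a::'a::ring_1) \<in> rideal a"
  unfolding rideal_def by (rule CollectI, rule exI[of _ 1], simp)
lemma self_l: "(a::'a::ring_1) \<in> lideal a"
  unfolding lideal_def by (rule CollectI, rule exI[of _ 1], simp)

lemma inv_mult: "involution s \<Longrightarrow> s (x * y) = s y * s x"
  by (simp add: involution_def)
lemma inv_inv: "involution s \<Longrightarrow> s (s x) = x"
  by (simp add: involution_def)

lemma ci_props:
  fixes s :: "'a::ring_1 \<Rightarrow> 'a"
  assumes inv: "involution s" and ci: "is_core_inverse s a x"
  shows "a * x * a = a \<and> s (a*x) = a*x \<and> x * a * x = x \<and> x * a * a = a \<and> a * x * x = x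
         \<and> (\<exists>u. x = a * u) \<and> (\<exists>v. a = x * v) \<and> (\<exists>w. x = w * s a)"
proof -
  have axa: "a * x * a = a" and r: "rideal x = rideal a" and l: "lideal x = lideal (s a)"
    using ci by (auto simp: is_core_inverse_def)
  have "x \<in> rideal a" using r self_r[of x] by simp
  then obtain u where u: "x = a * u" by (auto simp: rideal_def)
  have "a \<in> rideal x" using r self_r[of a] by simp
  then obtain v where v: "a = x * v" by (auto simp: rideal_def)
  have "x \<in> lideal (s a)" using l self_l[of x] by simp
  then obtain w where w: "x = w * s a" by (auto simp: lideal_def)
  have sa: "s a = s a * s (a * x)"
    using arg_cong[OF axa, of s] by (simp add: inv_mult[OF inv] mult.assoc)
  have x1: "x = x * s (a*x)" using w sa by (metis mult.assoc)
  have qx: "a * x * x = x" using u axa by (metis mult.assoc)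
  have q1: "a * x = a * x * s (a*x)" using x1 by (metis mult.assoc)
  have hq: "s (a*x) = a*x"
    using arg_cong[OF q1, of s] q1 by (simp add: inv_mult[OF inv] inv_inv[OF inv])
  have xax: "x * a * x = x" using x1 hq by (simp add: mult.assoc)
  have xaa: "x * a * a = a" using v xax by (metis mult.assoc)
  show ?thesis using axa hq xax xaa qx u v w by blast
qed

lemma ci_unique:
  fixes s :: "'a::ring_1 \<Rightarrow> 'a"
  assumes inv: "involution s" and cx: "is_core_inverse s a x" and cy: "is_core_inverse s a y"
  shows "x = y"
proof -
  note X = ci_props[OF inv cx] and Y = ci_props[OF inv cy]
  have X1: "a * x * a = a" and X2: "s (a*x) = a*x" and X3: "x * a * x = x" using X by blast+
  have Y1: "a * y * a = a" and Y2: "s (a*y) = a*y" and Y4: "y * a * a = a" using Y by blast+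
  obtain u where u: "x = a * u" using X by blast+
  have e0: "a * y * (a * x) = a * x"
  proof -
    have "a * y * (a * x) = (a * y * a) * x" by (simp add: mult.assoc)
    thus ?thesis using Y1 by simp
  qed
  have e1: "a * x * (a * y) = a * y"
  proof -
    have "a * x * (a * y) = (a * x * a) * y" by (simp add: mult.assoc)
    thus ?thesis using X1 by simp
  qed
  have "a * x = s (a * y * (a * x))" using e0 X2 by simp
  also have "\<dots> = s (a*x) * s (a*y)" by (rule inv_mult[OF inv])
  also have "\<dots> = a*y" using X2 Y2 e1 by simp
  finally have axy: "a * x = a * y" .
  have l: "lideal x = lideal y" using cx cy by (simp add: is_core_inverse_def)
  have "y \<in> lideal x" using l self_l[of y] by simp
  then obtain t where t: "y = t * x" by (auto simp: lideal_def)
  have "y = t * (x * a * x)" using t X3 by simp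
  also have "\<dots> = (t * x) * a * x" by (simp add: mult.assoc)
  finally have y1: "y = y * a * x" using t by simp
  have "y * a * x = (y * a * a) * u" using u by (simp add: mult.assoc)
  also have "\<dots> = x" using Y4 u by simp
  finally show ?thesis using y1 by simp
qed

lemma core_inv_ok:
  fixes s :: "'a::ring_1 \<Rightarrow> 'a"
  assumes inv: "involution s" and c: "core_invertible s a"
  shows "is_core_inverse s a (core_inv s a)"
proof -
  obtain x where x: "is_core_inverse s a x" using c by (auto simp: core_invertible_def)
  show ?thesis unfolding core_inv_def
    by (rule theI[where P="is_core_inverse s a", OF x]) (erule ci_unique[OF inv _ x])
qed

theorem theorem2p4:
  fixes s :: "'a::ring_1 \<Rightarrow> 'a" and a b :: 'a
  assumes "involution s" and "core_invertible s a"
  shows "(core_le s a b \<longleftrightarrow>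
           (\<exists>p. p * p = p \<and> p = s p \<and> a = p * b \<and> a * p = b * p \<and> rideal a = rideal p))
       \<and> (core_le s a b \<longleftrightarrow>
           (\<exists>p. p * p = p \<and> p = s p \<and> a = p * b \<and> a * p = b * p))
       \<and> (core_le s a b \<longleftrightarrow>
           (\<exists>p. p * p = p \<and> p = s p \<and>
              (1 - p) * a * p = 0 \<and> (1 - p) * a * (1 - p) = 0 \<and>
              p * b * p = p * a * p \<and> p * b * (1 - p) = p * a * (1 - p) \<and>
              (1 - p) * b * p = 0))"
proof -
  note inv = assms(1)
  define x where "x = core_inv s a"
  have X: "a * x * a = a \<and> s (a*x) = a*x \<and> x * a * x = x \<and> x * a * a = a \<and> a * x * x = x
         \<and> (\<exists>u. x = a * u) \<and> (\<exists>v. a = x * v) \<and> (\<exists>w. x = w * s a)"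
    using ci_props[OF inv core_inv_ok[OF inv assms(2)]] x_def by simp
  have X1: "a * x * a = a" and X2: "s (a*x) = a*x" and X3: "x * a * x = x"
    and X4: "x * a * a = a" and X5: "a * x * x = x" using X by blast+
  have cl: "core_le s a b \<longleftrightarrow> x * a = x * b \<and> a * x = b * x"
    by (simp add: core_le_def x_def)
  have A: "core_le s a b \<Longrightarrow>
      (\<exists>p. p * p = p \<and> p = s p \<and> a = p * b \<and> a * p = b * p \<and> rideal a = rideal p)"
  proof -
    assume "core_le s a b"
    hence e1: "x * a = x * b" and e2: "a * x = b * x" using cl by auto
    obtain v where v: "a = x * v" using X by blast+
    have pp: "a*x*(a*x) = a*x" using X1 by (metis mult.assoc)
    have pb: "a = a * x * b" using X1 e1 by (metis mult.assoc)
    have "b * (a * x) = b * x * v * x" using v by (simp add: mult.assoc)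
    also have "\<dots> = a * (x * v) * x" using e2 by (metis mult.assoc)
    also have "\<dots> = a * (a * x)" using v by (simp add: mult.assoc)
    finally have bp: "a * (a * x) = b * (a * x)" by simp
    have "rideal a = rideal (a * x)"
    proof
      show "rideal a \<subseteq> rideal (a * x)"
      proof
        fix y assume "y \<in> rideal a"
        then obtain z where z: "y = a * z" by (auto simp: rideal_def)
        have "(a * x) * (a * z) = (a * x * a) * z" by (simp add: mult.assoc)
        hence "y = (a * x) * (a * z)" using X1 z by simp
        thus "y \<in> rideal (a * x)" unfolding rideal_def by blast
      qed
      show "rideal (a * x) \<subseteq> rideal a"
      proof
        fix y assume "y \<in> rideal (a * x)"
        then obtain z where z: "y = a * x * z" by (auto simp: rideal_def)
        have "y = a * (x * z)" using z by (simp add: mult.assoc)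
        thus "y \<in> rideal a" unfolding rideal_def by blast
      qed
    qed
    thus ?thesis using pp pb bp X2 by metis
  qed
  have B: "(\<exists>p. p * p = p \<and> p = s p \<and> a = p * b \<and> a * p = b * p) \<Longrightarrow> core_le s a b"
  proof -
    assume "\<exists>p. p * p = p \<and> p = s p \<and> a = p * b \<and> a * p = b * p"
    then obtain p where pp: "p * p = p" and hp: "p = s p" and apb: "a = p * b" and ap: "a * p = b * p"
      by blast
    obtain u where u: "x = a * u" using X by blast+
    obtain w where w: "x = w * s a" using X by blast+
    have px: "p * x = x" using u apb pp by (metis mult.assoc)
    have "s a = s b * p" using apb hp by (simp add: inv_mult[OF inv])
    hence xp: "x * p = x" using w pp by (metis mult.assoc)
    have "x * b = x * a" using xp apb by (metis mult.assoc)
    moreover have "b * x = a * x" using px ap by (metis mult.assoc)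
    ultimately show ?thesis using cl by simp
  qed
  have C: "(\<exists>p. p * p = p \<and> p = s p \<and>
              (1 - p) * a * p = 0 \<and> (1 - p) * a * (1 - p) = 0 \<and>
              p * b * p = p * a * p \<and> p * b * (1 - p) = p * a * (1 - p) \<and>
              (1 - p) * b * p = 0) \<longleftrightarrow> (\<exists>p. p * p = p \<and> p = s p \<and> a = p * b \<and> a * p = b * p)"
  proof
    assume "\<exists>p. p * p = p \<and> p = s p \<and>
              (1 - p) * a * p = 0 \<and> (1 - p) * a * (1 - p) = 0 \<and>
              p * b * p = p * a * p \<and> p * b * (1 - p) = p * a * (1 - p) \<and>
              (1 - p) * b * p = 0"
    then obtain p where pp: "p * p = p" and hp: "p = s p" and h1: "(1 - p) * a * p = 0"
      and h2: "(1 - p) * a * (1 - p) = 0" and h3: "p * b * p = p * a * p"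
      and h4: "p * b * (1 - p) = p * a * (1 - p)" and h5: "(1 - p) * b * p = 0" by blast
    have "(1-p)*a = (1 - p) * a * p + (1 - p) * a * (1 - p)" by (simp add: algebra_simps)
    hence "(1-p)*a = 0" using h1 h2 by simp
    hence apa: "a = p * a" by (simp add: algebra_simps)
    have "p*b = p * b * p + p * b * (1 - p)" by (simp add: algebra_simps)
    also have "\<dots> = p * a * p + p * a * (1 - p)" using h3 h4 by simp
    also have "\<dots> = p * a" by (simp add: algebra_simps)
    finally have e1: "a = p * b" using apa by simp
    have "b * p = p * b * p + (1 - p) * b * p" by (simp add: algebra_simps)
    also have "\<dots> = p * a * p + (1 - p) * a * p" using h3 h5 h1 by simp
    also have "\<dots> = a * p" by (simp add: algebra_simps)
    finally show "\<exists>p. p * p = p \<and> p = s p \<and> a = p * b \<and> a * p = b * p"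
      using pp hp e1 by metis
  next
    assume "\<exists>p. p * p = p \<and> p = s p \<and> a = p * b \<and> a * p = b * p"
    then obtain p where pp: "p * p = p" and hp: "p = s p" and apb: "a = p * b" and ap: "a * p = b * p"
      by blast
    have q: "(1 - p) * p = 0" using pp by (simp add: algebra_simps)
    have h1: "(1 - p) * a = 0" using apb q by (metis mult.assoc mult_zero_left)
    have pa: "p * a = a" using apb pp by (metis mult.assoc)
    have "p * b * p = p * a * p" using ap by (simp add: mult.assoc)
    moreover have "p * b * (1 - p) = p * a * (1 - p)" using pa apb by simp
    moreover have "(1 - p) * b * p = 0" using ap h1 by (metis mult.assoc mult_zero_left)
    ultimately show "\<exists>p. p * p = p \<and> p = s p \<and>
              (1 - p) * a * p = 0 \<and> (1 - p) * a * (1 - p) = 0 \<and>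
              p * b * p = p * a * p \<and> p * b * (1 - p) = p * a * (1 - p) \<and>
              (1 - p) * b * p = 0" using pp hp h1 by (metis mult_zero_left)
  qed
  show ?thesis using A B C by blast
qed

end
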